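(* For integers $i,j\ge1$ with $i\neq j$, the central element $m_{i,i,j}=m_{i,i,j}(L_1,\dots,L_4)\in\mathbb Z S_4$ satisfies \begin{align*} \langle 1,m_{i,i,j}\rangle&=\tfrac{1}{24}(1+(-1)^j)\big(6^i+2^i3^j+2^j3^i+9(-1)^i(2^i+2^j)+9\cdot 2^i\big),\\ \langle s_1,m_{i,i,j}\rangle&=\tfrac{1}{24}(1-(-1)^j)\big(6^i+2^i3^j+2^j3^i+3(-1)^i(2^i+2^j)-3\cdot 2^i\big),\\ \langle s_{12},m_{i,i,j}\rangle&=\tfrac{1}{24}(1+(-1)^j)\big(6^i+2^i3^j+2^j3^i\big),\\ \langle s_{13},m_{i,i,j}\rangle&=\tfrac{1}{24}(1+(-1)^j)\big(6^i+2^i3^j+2^j3^i-3(-1)^i(2^i+2^j)-3\cdot 2^i\big),\\ \langle s_{123},m_{i,i,j}\rangle&=\tfrac{1}{24}(1-(-1)^j)\big(6^i+2^i3^j+2^j3^i-3(-1)^i(2^i+2^j)+3\cdot 2^i\big). \end{align*}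
   Context: $S_4$ is the symmetric group on $\{1,2,3,4\}$, $\mathbb Z S_4$ its integral group ring. Let $s_1=(1\,2)$, $s_2=(2\,3)$, $s_3=(3\,4)$, $s_{12}=s_1s_2$, $s_{13}=s_1s_3$, $s_{123}=s_1s_2s_3$. The Jucys–Murphy elements are $L_1=0$ and $L_i=\sum_{k=1}^{i-1}(k\ i)$ for $i=2,3,4$; they pairwise commute. For a partition $\mu=(\mu_1,\dots,\mu_r)$, $m_\mu(x_1,\dots,x_4)$ is the monomial symmetric polynomial: the sum of all distinct monomials $x_1^{\alpha_1}\cdots x_4^{\alpha_4}$ with $(\alpha_1,\dots,\alpha_4)$ a rearrangement of $(\mu_1,\dots,\mu_r,0,\dots,0)$. A subscript list such as $m_{i,i,j}$ denotes $m_\mu(L_1,\dots,L_4)$ where $\mu$ is the partition whose parts are the listed entries (sorted decreasingly). For $w\in S_4$ and $h\in\mathbb Z S_4$, $\langle w,h\rangle$ denotes the coefficient of $w$ in $h$; for central $h$ this equals the coefficient of the class sum of the conjugacy class of $w$. *)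

theory Defs
  imports "HOL-Combinatorics.Combinatorics"
begin

text \<open>Elements of the integral group ring Z S_4 are coefficient functions
  (nat => nat) => int (only values on S4 matter); the product is the
  convolution with delta_u * delta_v = delta_(u o v).\<close>

type_synonym perm = "nat \<Rightarrow> nat"
type_synonym gring = "perm \<Rightarrow> int"

definition S4 :: "perm set" where
  "S4 = {p. p permutes {1..4::nat}}"

definition gdelta :: "perm \<Rightarrow> gring" where
  "gdelta u = (\<lambda>w. if w = u then 1 else 0)"

definition gone :: gring where
  "gone = gdelta id"

definition gmul :: "gring \<Rightarrow> gring \<Rightarrow> gring" where
  "gmul a b = (\<lambda>w. \<Sum>u\<in>S4. a u * b (inv u \<circ> w))"

definition gpow :: "gring \<Rightarrow> nat \<Rightarrow> gring" where
  "gpow a n = ((gmul a) ^^ n) gone"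

definition JM :: "nat \<Rightarrow> gring" where
  "JM i = (\<lambda>w. \<Sum>k\<in>{1..<i}. gdelta (transpose k i) w)"

definition JM_monomial :: "(nat \<Rightarrow> nat) \<Rightarrow> gring" where
  "JM_monomial a = gmul (gpow (JM 1) (a 1)) (gmul (gpow (JM 2) (a 2))
      (gmul (gpow (JM 3) (a 3)) (gpow (JM 4) (a 4))))"

definition pad4 :: "nat list \<Rightarrow> nat \<Rightarrow> nat" where
  "pad4 mu k = (if 1 \<le> k \<and> k \<le> length mu then mu ! (k - 1) else 0)"

definition rearrangements4 :: "nat list \<Rightarrow> (nat \<Rightarrow> nat) set" where
  "rearrangements4 mu = {a. \<exists>\<sigma>. \<sigma> permutes {1..4::nat} \<and> a = pad4 mu \<circ> \<sigma>}"

definition msym_JM :: "nat list \<Rightarrow> gring" where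
  "msym_JM mu = (\<lambda>w. \<Sum>a\<in>rearrangements4 mu. JM_monomial a w)"

definition s1 :: perm where "s1 = transpose 1 2"
definition s2 :: perm where "s2 = transpose 2 3"
definition s3 :: perm where "s3 = transpose 3 4"

end

theory Submission
  imports Defs
begin



lemma S4_inv: "u \<in> S4 \<Longrightarrow> inv u \<in> S4"
  by (simp add: S4_def permutes_inv)
lemma S4_comp: "u \<in> S4 \<Longrightarrow> v \<in> S4 \<Longrightarrow> u \<circ> v \<in> S4"
  by (simp add: S4_def permutes_compose)
lemma S4_id: "id \<in> S4" by (simp add: S4_def permutes_id)
lemma S4_bij: "u \<in> S4 \<Longrightarrow> bij u" by (simp add: S4_def permutes_bij)
lemma S4_finite: "finite S4" unfolding S4_def by (rule finite_permutations) simp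

lemma S4_invl: "u \<in> S4 \<Longrightarrow> inv u \<circ> u = id"
  unfolding S4_def using permutes_inv_o(2) by blast
lemma S4_invr: "u \<in> S4 \<Longrightarrow> u \<circ> inv u = id"
  unfolding S4_def using permutes_inv_o(1) by blast

lemma S4_left_bij: "u \<in> S4 \<Longrightarrow> bij_betw (\<lambda>v. u \<circ> v) S4 S4"
proof (rule bij_betw_byWitness[where f'="\<lambda>v. inv u \<circ> v"])
  assume u: "u \<in> S4"
  show "\<forall>a\<in>S4. inv u \<circ> (u \<circ> a) = a" using S4_invl[OF u] by (simp add: o_assoc)
  show "\<forall>a\<in>S4. u \<circ> (inv u \<circ> a) = a" using S4_invr[OF u] by (simp add: o_assoc)
  show "(\<lambda>v. u \<circ> v) ` S4 \<subseteq> S4" using u S4_comp by auto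
  show "(\<lambda>v. inv u \<circ> v) ` S4 \<subseteq> S4" using u S4_comp S4_inv by auto
qed

lemma gmul_assoc: "gmul (gmul a b) c w = gmul a (gmul b c) w"
proof -
  have "gmul (gmul a b) c w = (\<Sum>x\<in>S4. \<Sum>u\<in>S4. a u * b (inv u \<circ> x) * c (inv x \<circ> w))"
    by (simp add: gmul_def sum_distrib_right)
  also have "\<dots> = (\<Sum>u\<in>S4. a u * (\<Sum>x\<in>S4. b (inv u \<circ> x) * c (inv x \<circ> w)))"
    by (subst sum.swap) (simp add: sum_distrib_left mult.assoc)
  also have "\<dots> = (\<Sum>u\<in>S4. a u * (\<Sum>v\<in>S4. b v * c (inv v \<circ> (inv u \<circ> w))))"
  proof (rule sum.cong[OF refl])
    fix u assume u: "u \<in> S4"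
    have "(\<Sum>x\<in>S4. b (inv u \<circ> x) * c (inv x \<circ> w)) =
          (\<Sum>v\<in>S4. b (inv u \<circ> (u \<circ> v)) * c (inv (u \<circ> v) \<circ> w))"
      using sum.reindex_bij_betw[OF S4_left_bij[OF u], of "\<lambda>x. b (inv u \<circ> x) * c (inv x \<circ> w)"]
      by simp
    also have "\<dots> = (\<Sum>v\<in>S4. b v * c (inv v \<circ> (inv u \<circ> w)))"
    proof (rule sum.cong[OF refl])
      fix v assume v: "v \<in> S4"
      have "inv u \<circ> (u \<circ> v) = v" using S4_invl[OF u] by (simp add: o_assoc)
      moreover have "inv (u \<circ> v) = inv v \<circ> inv u"
        using o_inv_distrib S4_bij u v by blast
      ultimately show "b (inv u \<circ> (u \<circ> v)) * c (inv (u \<circ> v) \<circ> w) = b v * c (inv v \<circ> (inv u \<circ> w))"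
        by (simp add: o_assoc)
    qed
    finally show "a u * (\<Sum>x\<in>S4. b (inv u \<circ> x) * c (inv x \<circ> w)) =
       a u * (\<Sum>v\<in>S4. b v * c (inv v \<circ> (inv u \<circ> w)))" by simp
  qed
  also have "\<dots> = gmul a (gmul b c) w" by (simp add: gmul_def)
  finally show ?thesis .
qed

lemma gmul_cong:
  assumes "\<And>w. w \<in> S4 \<Longrightarrow> b w = b' w" "w \<in> S4"
  shows "gmul a b w = gmul a b' w"
  unfolding gmul_def using assms S4_comp S4_inv by (intro sum.cong) auto

lemma gmul_scal: "gmul a (\<lambda>w. c * b w) w = c * gmul a b w"
  by (simp add: gmul_def sum_distrib_left mult.left_commute)

lemma gmul_sum: "finite T \<Longrightarrow> gmul a (\<lambda>w. \<Sum>t\<in>T. f t w) w = (\<Sum>t\<in>T. gmul a (f t) w)"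
  unfolding gmul_def sum_distrib_left by (rule sum.swap)

lemma gmul_sum_list: "gmul a (\<lambda>w. sum_list (map (\<lambda>t. f t w) xs)) w = sum_list (map (\<lambda>t. gmul a (f t) w) xs)"
  by (induction xs) (simp_all add: gmul_def sum.distrib distrib_left)

lemma gmul_one_left: "gmul gone b w = b w"
proof -
  have "gmul gone b w = (\<Sum>u\<in>S4. if u = id then b (inv u \<circ> w) else 0)"
    unfolding gmul_def gone_def gdelta_def by (rule sum.cong) auto
  also have "\<dots> = b w" using S4_id S4_finite by (simp add: sum.delta)
  finally show ?thesis .
qed

lemma gmul_one_right: "w \<in> S4 \<Longrightarrow> gmul a gone w = a w"
proof -
  assume w: "w \<in> S4"
  have "gmul a gone w = (\<Sum>u\<in>S4. if u = w then a u else 0)"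
    unfolding gmul_def gone_def gdelta_def
  proof (rule sum.cong[OF refl])
    fix u assume u: "u \<in> S4"
    have "inv u \<circ> w = id \<longleftrightarrow> u = w"
    proof
      assume "inv u \<circ> w = id"
      then have "u \<circ> (inv u \<circ> w) = u" by simp
      then show "u = w" using S4_invr[OF u] by (simp add: o_assoc)
    qed (use S4_invl[OF u] in simp)
    then show "a u * (if inv u \<circ> w = id then 1 else 0) = (if u = w then a u else 0)" by simp
  qed
  also have "\<dots> = a w" using w S4_finite by (simp add: sum.delta)
  finally show ?thesis .
qed

lemma gmul_delta_left: "u \<in> S4 \<Longrightarrow> gmul (gdelta u) b w = b (inv u \<circ> w)"
proof -
  assume u: "u \<in> S4"
  have "gmul (gdelta u) b w = (\<Sum>x\<in>S4. if x = u then b (inv x \<circ> w) else 0)"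
    unfolding gmul_def gdelta_def by (rule sum.cong) auto
  also have "\<dots> = b (inv u \<circ> w)" using u S4_finite by simp
  finally show ?thesis .
qed



definition pl :: "nat list \<Rightarrow> perm" where
  "pl L = (\<lambda>x. if 1 \<le> x \<and> x \<le> 4 then L ! (x - 1) else x)"
definition PL :: "nat list list" where "PL = [[1, 2, 3, 4], [1, 2, 4, 3], [1, 3, 2, 4], [1, 3, 4, 2], [1, 4, 2, 3], [1, 4, 3, 2], [2, 1, 3, 4], [2, 1, 4, 3], [2, 3, 1, 4], [2, 3, 4, 1], [2, 4, 1, 3], [2, 4, 3, 1], [3, 1, 2, 4], [3, 1, 4, 2], [3, 2, 1, 4], [3, 2, 4, 1], [3, 4, 1, 2], [3, 4, 2, 1], [4, 1, 2, 3], [4, 1, 3, 2], [4, 2, 1, 3], [4, 2, 3, 1], [4, 3, 1, 2], [4, 3, 2, 1]]"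
definition tabs :: "(int \<times> int \<times> int \<times> int list) list" where "tabs = [
  ((1), (2), (3), [(2), (2), (2), (2), (2), (2), (2), (2), (2), (2), (2), (2), (2), (2), (2), (2), (2), (2), (2), (2), (2), (2), (2), (2)]),
  ((1), (2), (-1), [(6), (-2), (6), (-2), (-2), (-2), (6), (-2), (6), (-2), (-2), (-2), (6), (-2), (6), (-2), (-2), (-2), (-2), (-2), (-2), (-2), (-2), (-2)]),
  ((1), (-1), (2), [(6), (2), (-3), (-1), (-1), (5), (6), (2), (-3), (-1), (-1), (5), (-3), (-1), (-3), (-1), (-4), (-4), (-1), (5), (-1), (5), (-4), (-4)]),
  ((1), (-1), (0), [(4), (4), (-2), (-2), (-2), (-2), (4), (4), (-2), (-2), (-2), (-2), (-2), (-2), (-2), (-2), (4), (4), (-2), (-2), (-2), (-2), (4), (4)]),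
  ((1), (-1), (-2), [(6), (-6), (-3), (3), (3), (-3), (6), (-6), (-3), (3), (3), (-3), (-3), (3), (-3), (3), (0), (0), (3), (-3), (3), (-3), (0), (0)]),
  ((-1), (1), (2), [(6), (6), (3), (3), (3), (3), (-6), (-6), (-3), (-3), (-3), (-3), (-3), (-3), (3), (3), (0), (0), (-3), (-3), (3), (3), (0), (0)]),
  ((-1), (1), (0), [(4), (-4), (2), (-2), (-2), (2), (-4), (4), (-2), (2), (2), (-2), (-2), (2), (2), (-2), (4), (-4), (2), (-2), (-2), (2), (-4), (4)]),
  ((-1), (1), (-2), [(6), (-2), (3), (-1), (-1), (-5), (-6), (2), (-3), (1), (1), (5), (-3), (1), (3), (-1), (-4), (4), (1), (5), (-1), (-5), (4), (-4)]),
  ((-1), (-2), (1), [(6), (2), (-6), (-2), (-2), (2), (-6), (-2), (6), (2), (2), (-2), (6), (2), (-6), (-2), (-2), (2), (2), (-2), (-2), (2), (2), (-2)]),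
  ((-1), (-2), (-3), [(2), (-2), (-2), (2), (2), (-2), (-2), (2), (2), (-2), (-2), (2), (2), (-2), (-2), (2), (2), (-2), (-2), (2), (2), (-2), (-2), (2)])]"

definition coef :: "int list \<Rightarrow> nat list \<Rightarrow> int" where
  "coef vals L = (case map_of (zip PL vals) L of Some c \<Rightarrow> c | None \<Rightarrow> 0)"

definition chk :: "nat \<Rightarrow> int \<Rightarrow> int list \<Rightarrow> bool" where
  "chk k c vals = list_all (\<lambda>L. sum_list (map (\<lambda>k'. coef vals (map (transpose k' k) L)) [1..<k]) = c * coef vals L) PL"

definition chk_all :: bool where
  "chk_all = list_all (\<lambda>(c2,c3,c4,vals). chk 2 c2 vals \<and> chk 3 c3 vals \<and> chk 4 c4 vals) tabs"

lemma chk_all_ok: chk_all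
  by code_simp

definition chk_sum :: bool where
  "chk_sum = list_all (\<lambda>L. sum_list (map (\<lambda>t. coef (snd (snd (snd t))) L) tabs) = (if L = [1,2,3,4] then 48 else 0)) PL"

lemma chk_sum_ok: chk_sum
  by code_simp

lemma len4: "length L = 4 \<Longrightarrow> \<exists>a b c d. L = [a,b,c,d]"
  by (cases L; cases "tl L"; cases "tl (tl L)"; cases "tl (tl (tl L))"; simp)

lemma pl_map: "length L = 4 \<Longrightarrow> map (pl L) [1,2,3,4] = L"
  using len4[of L] by (auto simp: pl_def)

lemma pl_inj: "length L = 4 \<Longrightarrow> length M = 4 \<Longrightarrow> pl L = pl M \<Longrightarrow> L = M"
  using pl_map by metis

lemma PL_len: "L \<in> set PL \<Longrightarrow> length L = 4"
  by (auto simp: PL_def)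

lemma atl4: "{1..4::nat} = {1,2,3,4}" by auto

lemma pl4: "pl [a,b,c,d] = (\<lambda>x. if x = 1 then a else if x = 2 then b else if x = 3 then c else if x = 4 then d else x)"
proof
  fix x show "pl [a,b,c,d] x = (if x = 1 then a else if x = 2 then b else if x = 3 then c else if x = 4 then d else x)"
    by (cases "x = 1"; cases "x = 2"; cases "x = 3"; cases "x = 4"; simp add: pl_def)
qed

lemma pl_perm_gen:
  assumes "distinct [a,b,c,d]" "{a,b,c,d} = {1,2,3,4::nat}"
  shows "pl [a,b,c,d] \<in> S4"
proof -
  let ?f = "pl [a,b,c,d]"
  let ?A = "{1,2,3,4::nat}"
  have "?f ` ?A = {a,b,c,d}" by (auto simp: pl4)
  then have img: "?f ` ?A = ?A" using assms(2) by simp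
  have "card (?f ` ?A) = card ?A" by (simp only: img)
  then have "inj_on ?f ?A" by (intro eq_card_imp_inj_on) simp_all
  then have "bij_betw ?f ?A ?A" using img by (simp add: bij_betw_def)
  moreover have "\<And>x. x \<notin> ?A \<Longrightarrow> ?f x = x" by (simp add: pl4)
  ultimately have "?f permutes ?A" by (rule bij_imp_permutes)
  then show ?thesis unfolding S4_def atl4 by simp
qed

lemma PL_facts: "L \<in> set PL \<Longrightarrow> \<exists>a b c d. L = [a,b,c,d] \<and> distinct [a,b,c,d] \<and> {a,b,c,d} = {1,2,3,4::nat}"
  unfolding PL_def by (simp; elim disjE; simp add: insert_commute)

lemma PL_S4: "L \<in> set PL \<Longrightarrow> pl L \<in> S4"
  using PL_facts pl_perm_gen by blast

lemma distinct_PL: "distinct PL" by (simp add: PL_def)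

lemma S4_eq: "S4 = pl ` set PL"
proof (rule card_subset_eq[symmetric])
  show "finite S4" by (rule S4_finite)
  show "pl ` set PL \<subseteq> S4" using PL_S4 by auto
  have "inj_on pl (set PL)" by (rule inj_onI) (use pl_inj PL_len in blast)
  then have "card (pl ` set PL) = 24" using distinct_PL
    by (simp add: card_image distinct_card) (simp add: PL_def)
  moreover have "card S4 = 24" unfolding S4_def
    using card_permutations[of "{1..4::nat}" 4] by (simp add: fact_numeral)
  ultimately show "card (pl ` set PL) = card S4" by simp
qed

lemma S4_cases: "w \<in> S4 \<Longrightarrow> \<exists>L\<in>set PL. w = pl L"
  using S4_eq by auto

lemma pl_in_PL: "length M = 4 \<Longrightarrow> pl M \<in> S4 \<Longrightarrow> M \<in> set PL"
  using S4_cases pl_inj PL_len by metis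

lemma transpose_pl:
  assumes "a \<in> {1..4}" "b \<in> {1..4}" "length L = 4"
  shows "transpose a b \<circ> pl L = pl (map (transpose a b) L)"
proof
  fix x show "(transpose a b \<circ> pl L) x = pl (map (transpose a b) L) x"
    using assms by (auto simp: pl_def transpose_def)
qed

definition Fg :: "int list \<Rightarrow> gring" where
  "Fg vals w = (if w \<in> S4 then coef vals (map w [1,2,3,4]) else 0)"

lemma Fg_pl: "L \<in> set PL \<Longrightarrow> Fg vals (pl L) = coef vals L"
proof -
  assume L: "L \<in> set PL"
  have "map (pl L) [1,2,3,4] = L" using pl_map PL_len L by blast
  then show ?thesis using L PL_S4 unfolding Fg_def by simp
qed

lemma gmul_sum_left: "finite T \<Longrightarrow> gmul (\<lambda>u. \<Sum>t\<in>T. f t u) b w = (\<Sum>t\<in>T. gmul (f t) b w)"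
  unfolding gmul_def sum_distrib_right by (rule sum.swap)

lemma transp_S4: "a \<in> {1..4} \<Longrightarrow> b \<in> {1..4} \<Longrightarrow> transpose a b \<in> S4"
  unfolding S4_def by (simp add: permutes_swap_id)

lemma JM_left:
  assumes k: "k \<in> {2,3,4}"
  shows "gmul (JM k) b w = sum_list (map (\<lambda>k'. b (transpose k' k \<circ> w)) [1..<k])"
proof -
  have "gmul (JM k) b w = (\<Sum>k'\<in>{1..<k}. gmul (gdelta (transpose k' k)) b w)"
    unfolding JM_def by (rule gmul_sum_left) simp
  also have "\<dots> = (\<Sum>k'\<in>{1..<k}. b (transpose k' k \<circ> w))"
    by (rule sum.cong[OF refl]) (use k in \<open>auto simp: gmul_delta_left transp_S4\<close>)
  also have "\<dots> = sum_list (map (\<lambda>k'. b (transpose k' k \<circ> w)) [1..<k])"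
    by (simp add: sum_list_distinct_conv_sum_set)
  finally show ?thesis .
qed

lemma eig:
  assumes k: "k \<in> {2,3,4}" and c: "chk k c vals" and w: "w \<in> S4"
  shows "gmul (JM k) (Fg vals) w = c * Fg vals w"
proof -
  obtain L where L: "L \<in> set PL" "w = pl L" using S4_cases w by blast
  have len: "length L = 4" using PL_len L by simp
  have "gmul (JM k) (Fg vals) w = sum_list (map (\<lambda>k'. Fg vals (transpose k' k \<circ> pl L)) [1..<k])"
    using JM_left[OF k] L by simp
  also have "\<dots> = sum_list (map (\<lambda>k'. coef vals (map (transpose k' k) L)) [1..<k])"
  proof -
    have "\<And>k'. k' \<in> set [1..<k] \<Longrightarrow> Fg vals (transpose k' k \<circ> pl L) = coef vals (map (transpose k' k) L)"
    proof -
      fix k' assume "k' \<in> set [1..<k]"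
      then have ab: "k' \<in> {1..4}" "k \<in> {1..4}" using k by auto
      have eq: "transpose k' k \<circ> pl L = pl (map (transpose k' k) L)"
        by (rule transpose_pl[OF ab len])
      have "pl (map (transpose k' k) L) \<in> S4"
        using eq transp_S4[OF ab] PL_S4[OF L(1)] S4_comp by metis
      then have "map (transpose k' k) L \<in> set PL" using pl_in_PL len by simp
      then show "Fg vals (transpose k' k \<circ> pl L) = coef vals (map (transpose k' k) L)"
        using eq Fg_pl by simp
    qed
    then show ?thesis by (metis (no_types, lifting) map_eq_conv)
  qed
  also have "\<dots> = c * coef vals L"
    using c L(1) unfolding chk_def list_all_iff by blast
  also have "\<dots> = c * Fg vals w" using Fg_pl L by simp
  finally show ?thesis .
qed



lemma gpow_Suc: "gpow A (Suc n) = gmul A (gpow A n)"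
  by (simp add: gpow_def)
lemma gpow_0: "gpow A 0 = gone"
  by (simp add: gpow_def)

lemma pow_eig:
  assumes "\<And>w. w \<in> S4 \<Longrightarrow> gmul A F w = c * F w" "w \<in> S4"
  shows "gmul (gpow A n) F w = c^n * F w"
  using assms(2)
proof (induction n arbitrary: w)
  case 0 then show ?case by (simp add: gpow_0 gmul_one_left)
next
  case (Suc n)
  have "gmul (gpow A (Suc n)) F w = gmul A (gmul (gpow A n) F) w"
    by (simp add: gpow_Suc gmul_assoc)
  also have "\<dots> = gmul A (\<lambda>w. c^n * F w) w"
    by (rule gmul_cong) (use Suc in auto)
  also have "\<dots> = c^n * (c * F w)" by (simp add: gmul_scal assms(1) Suc.prems)
  finally show ?case by simp
qed

definition X :: "nat \<Rightarrow> nat \<Rightarrow> nat \<Rightarrow> gring" where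
  "X a b c = gmul (gpow (JM 2) a) (gmul (gpow (JM 3) b) (gpow (JM 4) c))"

lemma tab_chk: "(c2,c3,c4,vals) \<in> set tabs \<Longrightarrow> chk 2 c2 vals \<and> chk 3 c3 vals \<and> chk 4 c4 vals"
  using chk_all_ok unfolding chk_all_def list_all_iff by fastforce

lemma X_eig:
  assumes t: "(c2,c3,c4,vals) \<in> set tabs" and w: "w \<in> S4"
  shows "gmul (X a b c) (Fg vals) w = c2^a * c3^b * c4^c * Fg vals w"
proof -
  have e2: "\<And>w. w \<in> S4 \<Longrightarrow> gmul (JM 2) (Fg vals) w = c2 * Fg vals w"
    using eig tab_chk[OF t] by simp
  have e3: "\<And>w. w \<in> S4 \<Longrightarrow> gmul (JM 3) (Fg vals) w = c3 * Fg vals w"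
    using eig tab_chk[OF t] by simp
  have e4: "\<And>w. w \<in> S4 \<Longrightarrow> gmul (JM 4) (Fg vals) w = c4 * Fg vals w"
    using eig tab_chk[OF t] by simp
  have s34: "\<And>w. w \<in> S4 \<Longrightarrow> gmul (gmul (gpow (JM 3) b) (gpow (JM 4) c)) (Fg vals) w = c3^b * c4^c * Fg vals w"
  proof -
    fix w :: perm assume w: "w \<in> S4"
    have "gmul (gmul (gpow (JM 3) b) (gpow (JM 4) c)) (Fg vals) w
        = gmul (gpow (JM 3) b) (gmul (gpow (JM 4) c) (Fg vals)) w" by (rule gmul_assoc)
    also have "\<dots> = gmul (gpow (JM 3) b) (\<lambda>w. c4^c * Fg vals w) w"
      by (rule gmul_cong) (use w pow_eig[OF e4] in auto)
    also have "\<dots> = c4^c * (c3^b * Fg vals w)" by (simp add: gmul_scal pow_eig[OF e3] w)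
    finally show "gmul (gmul (gpow (JM 3) b) (gpow (JM 4) c)) (Fg vals) w = c3^b * c4^c * Fg vals w"
      by simp
  qed
  have "gmul (X a b c) (Fg vals) w = gmul (gpow (JM 2) a) (gmul (gmul (gpow (JM 3) b) (gpow (JM 4) c)) (Fg vals)) w"
    unfolding X_def by (rule gmul_assoc)
  also have "\<dots> = gmul (gpow (JM 2) a) (\<lambda>w. (c3^b * c4^c) * Fg vals w) w"
    by (rule gmul_cong) (use w s34 in auto)
  also have "\<dots> = (c3^b * c4^c) * (c2^a * Fg vals w)" by (simp add: gmul_scal pow_eig[OF e2] w)
  finally show ?thesis by simp
qed

lemma id_pl: "id = pl [1,2,3,4]"
  by (rule ext) (simp add: pl4)

lemma sum_tabs:
  assumes w: "w \<in> S4"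
  shows "sum_list (map (\<lambda>t. Fg (snd (snd (snd t))) w) tabs) = 48 * gone w"
proof -
  obtain L where L: "L \<in> set PL" "w = pl L" using S4_cases w by blast
  have "sum_list (map (\<lambda>t. Fg (snd (snd (snd t))) w) tabs) = sum_list (map (\<lambda>t. coef (snd (snd (snd t))) L) tabs)"
    using L by (simp add: Fg_pl)
  also have "\<dots> = (if L = [1,2,3,4] then 48 else 0)"
    using chk_sum_ok L(1) unfolding chk_sum_def list_all_iff by blast
  also have "\<dots> = 48 * gone w"
  proof -
    have "w = id \<longleftrightarrow> L = [1,2,3,4]"
      using L pl_inj[OF PL_len[OF L(1)], of "[1,2,3,4]"] id_pl by auto
    then show ?thesis by (simp add: gone_def gdelta_def)
  qed
  finally show ?thesis .
qed

lemma X_decomp: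
  assumes w: "w \<in> S4"
  shows "48 * X a b c w = sum_list (map (\<lambda>(c2,c3,c4,vals). c2^a * c3^b * c4^c * Fg vals w) tabs)"
proof -
  have "48 * X a b c w = gmul (X a b c) (\<lambda>w. 48 * gone w) w"
    by (simp add: gmul_scal gmul_one_right w)
  also have "\<dots> = gmul (X a b c) (\<lambda>w. sum_list (map (\<lambda>t. Fg (snd (snd (snd t))) w) tabs)) w"
    by (rule gmul_cong) (use w sum_tabs in auto)
  also have "\<dots> = sum_list (map (\<lambda>t. gmul (X a b c) (Fg (snd (snd (snd t)))) w) tabs)"
    by (rule gmul_sum_list)
  also have "\<dots> = sum_list (map (\<lambda>(c2,c3,c4,vals). c2^a * c3^b * c4^c * Fg vals w) tabs)"
  proof (rule arg_cong[where f=sum_list], rule map_cong[OF refl])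
    fix t assume t: "t \<in> set tabs"
    obtain c2 c3 c4 vals where "t = (c2,c3,c4,vals)" by (cases t) auto
    then show "gmul (X a b c) (Fg (snd (snd (snd t)))) w = (case t of (c2,c3,c4,vals) \<Rightarrow> c2^a * c3^b * c4^c * Fg vals w)"
      using X_eig t w by simp
  qed
  finally show ?thesis .
qed



definition fv :: "nat list \<Rightarrow> nat \<Rightarrow> nat" where
  "fv v = (\<lambda>k. if 1 \<le> k \<and> k \<le> 4 then v ! (k - 1) else 0)"

lemma fv_map: "length v = 4 \<Longrightarrow> map (fv v) [1,2,3,4] = v"
  using len4[of v] by (auto simp: fv_def)

lemma pad_pl:
  assumes "L \<in> set PL" "length mu = 3"
  shows "pad4 mu \<circ> pl L = fv (map (pad4 mu) L)"
proof
  fix x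
  obtain a b c d where L: "L = [a,b,c,d]" "{a,b,c,d} = {1,2,3,4::nat}" using PL_facts assms(1) by blast
  have "a \<in> {1,2,3,4}" "b \<in> {1,2,3,4}" "c \<in> {1,2,3,4}" "d \<in> {1,2,3,4}" using L(2) by blast+
  then show "(pad4 mu \<circ> pl L) x = fv (map (pad4 mu) L) x"
    using assms(2) unfolding L(1)
    by (cases "x = 1"; cases "x = 2"; cases "x = 3"; cases "x = 4"; auto simp: pl4 fv_def pad4_def)
qed

lemma R_eq:
  assumes "length mu = 3"
  shows "rearrangements4 mu = fv ` set (map (map (pad4 mu)) PL)"
proof -
  have "rearrangements4 mu = (\<lambda>s. pad4 mu \<circ> s) ` S4"
    unfolding rearrangements4_def S4_def by auto
  also have "\<dots> = (\<lambda>L. pad4 mu \<circ> pl L) ` set PL" by (simp add: S4_eq image_image)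
  also have "\<dots> = (\<lambda>L. fv (map (pad4 mu) L)) ` set PL"
    using pad_pl[OF _ assms] by (intro image_cong) auto
  also have "\<dots> = fv ` set (map (map (pad4 mu)) PL)" by (simp add: image_image)
  finally show ?thesis .
qed

lemma JM1_zero: "JM 1 = (\<lambda>w. 0)" by (simp add: JM_def fun_eq_iff)

lemma mono_zero: "a 1 \<noteq> 0 \<Longrightarrow> JM_monomial a w = 0"
proof -
  assume "a 1 \<noteq> 0"
  then obtain n where n: "a 1 = Suc n" by (cases "a 1") auto
  have "gpow (JM 1) (Suc n) = (\<lambda>w. 0)"
    by (simp only: gpow_Suc JM1_zero) (simp add: gmul_def)
  then have "gpow (JM 1) (a 1) = (\<lambda>w. 0)" by (simp only: n)
  then show ?thesis by (simp add: JM_monomial_def gmul_def)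
qed

lemma mono_fv: "JM_monomial (fv [0,x,y,z]) w = X x y z w"
  by (simp add: JM_monomial_def fv_def gpow_0 gmul_one_left X_def)

lemma sort_eq: "rev (sort [i, i, j::nat]) = (if i < j then [j,i,i] else [i,i,j])"
  by auto

lemma m_eq:
  fixes i j :: nat
  assumes "i \<ge> 1" "j \<ge> 1" "i \<noteq> j"
  shows "msym_JM (rev (sort [i, i, j])) w = X i i j w + X i j i w + X j i i w"
proof -
  define mu where "mu = rev (sort [i, i, j])"
  have len: "length mu = 3" by (simp add: mu_def)
  define V where "V = set (map (map (pad4 mu)) PL)"
  have lenV: "\<And>v. v \<in> V \<Longrightarrow> length v = 4" unfolding V_def using PL_len by auto
  have injV: "inj_on fv V" by (rule inj_onI) (metis fv_map lenV)
  have finV: "finite V" by (simp add: V_def)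
  have "msym_JM mu w = (\<Sum>v\<in>V. JM_monomial (fv v) w)"
    unfolding msym_JM_def R_eq[OF len] V_def[symmetric] using injV by (simp add: sum.reindex)
  also have "\<dots> = (\<Sum>v\<in>V \<inter> {v. hd v = 0}. JM_monomial (fv v) w)"
  proof (rule sum.mono_neutral_right[OF finV], blast)
    show "\<forall>v\<in>V - V \<inter> {v. hd v = 0}. JM_monomial (fv v) w = 0"
    proof
      fix v assume v: "v \<in> V - V \<inter> {v. hd v = 0}"
      then have "length v = 4" using lenV by auto
      then have "fv v 1 = hd v" by (cases v) (auto simp: fv_def)
      then show "JM_monomial (fv v) w = 0" using v mono_zero by auto
    qed
  qed
  also have "V \<inter> {v. hd v = 0} = {[0,i,i,j],[0,i,j,i],[0,j,i,i]}"
    using assms unfolding V_def mu_def sort_eq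
    by (cases "i < j") (auto simp: PL_def pad4_def)
  also have "(\<Sum>v\<in>{[0,i,i,j],[0,i,j,i],[0,j,i,i]}. JM_monomial (fv v) w) = X i i j w + X i j i w + X j i i w"
    using assms by (simp add: mono_fv)
  finally show ?thesis by (simp add: mu_def)
qed



lemma X_at:
  assumes "L0 \<in> set PL"
  shows "48 * X a b c (pl L0) = sum_list (map (\<lambda>(c2,c3,c4,vals). c2^a * c3^b * c4^c * coef vals L0) tabs)"
proof -
  have "48 * X a b c (pl L0) = sum_list (map (\<lambda>(c2,c3,c4,vals). c2^a * c3^b * c4^c * Fg vals (pl L0)) tabs)"
    using X_decomp PL_S4[OF assms] by blast
  also have "\<dots> = sum_list (map (\<lambda>(c2,c3,c4,vals). c2^a * c3^b * c4^c * coef vals L0) tabs)"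
    using Fg_pl[OF assms] by (simp add: case_prod_beta)
  finally show ?thesis .
qed

lemma six: "(6::rat)^n = 2^n * 3^n"
  by (simp flip: power_mult_distrib)

lemma comp_s1: "s1 = pl [2,1,3,4]" by (rule ext) (simp add: pl4 s1_def transpose_def)
lemma comp_s12: "s1 \<circ> s2 = pl [2,3,1,4]" by (rule ext) (simp add: pl4 s1_def s2_def transpose_def)
lemma comp_s13: "s1 \<circ> s3 = pl [2,1,4,3]" by (rule ext) (simp add: pl4 s1_def s3_def transpose_def)
lemma comp_s123: "s1 \<circ> s2 \<circ> s3 = pl [2,3,4,1]" by (rule ext) (simp add: pl4 s1_def s2_def s3_def transpose_def)

lemma val_id:
  fixes i j :: nat
  assumes "i \<ge> 1" and "j \<ge> 1"
  shows "(48::rat) * of_int (X i i j (pl [1,2,3,4]) + X i j i (pl [1,2,3,4]) + X j i i (pl [1,2,3,4])) = 48 * ((1/24::rat) * (1 + (-1)^j) * (6^i + 2^i*3^j + 2^j*3^i + 9*(-1)^i*(2^i + 2^j) + 9*2^i))"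
proof -
  have L: "[1,2,3,4] \<in> set PL" by (simp add: PL_def)
  have e: "48 * (X i i j (pl [1,2,3,4]) + X i j i (pl [1,2,3,4]) + X j i i (pl [1,2,3,4])) =
     48 * X i i j (pl [1,2,3,4]) + 48 * X i j i (pl [1,2,3,4]) + 48 * X j i i (pl [1,2,3,4])" by simp
  have i0: "i \<noteq> 0" "j \<noteq> 0" using assms by auto
  show ?thesis
    unfolding of_int_mult[symmetric, where 'a=rat] of_int_numeral[symmetric, where 'a=rat] e X_at[OF L]
    apply (cases "even i"; cases "even j")
    using i0 apply (simp_all add: tabs_def coef_def PL_def six algebra_simps power_0_left)
    done
qed

lemma val_s1:
  fixes i j :: nat
  assumes "i \<ge> 1" and "j \<ge> 1"
  shows "(48::rat) * of_int (X i i j (pl [2,1,3,4]) + X i j i (pl [2,1,3,4]) + X j i i (pl [2,1,3,4])) = 48 * ((1/24::rat) * (1 - (-1)^j) * (6^i + 2^i*3^j + 2^j*3^i + 3*(-1)^i*(2^i + 2^j) - 3*2^i))"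
proof -
  have L: "[2,1,3,4] \<in> set PL" by (simp add: PL_def)
  have e: "48 * (X i i j (pl [2,1,3,4]) + X i j i (pl [2,1,3,4]) + X j i i (pl [2,1,3,4])) =
     48 * X i i j (pl [2,1,3,4]) + 48 * X i j i (pl [2,1,3,4]) + 48 * X j i i (pl [2,1,3,4])" by simp
  have i0: "i \<noteq> 0" "j \<noteq> 0" using assms by auto
  show ?thesis
    unfolding of_int_mult[symmetric, where 'a=rat] of_int_numeral[symmetric, where 'a=rat] e X_at[OF L]
    apply (cases "even i"; cases "even j")
    using i0 apply (simp_all add: tabs_def coef_def PL_def six algebra_simps power_0_left)
    done
qed

lemma val_s12:
  fixes i j :: nat
  assumes "i \<ge> 1" and "j \<ge> 1"
  shows "(48::rat) * of_int (X i i j (pl [2,3,1,4]) + X i j i (pl [2,3,1,4]) + X j i i (pl [2,3,1,4])) = 48 * ((1/24::rat) * (1 + (-1)^j) * (6^i + 2^i*3^j + 2^j*3^i))"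
proof -
  have L: "[2,3,1,4] \<in> set PL" by (simp add: PL_def)
  have e: "48 * (X i i j (pl [2,3,1,4]) + X i j i (pl [2,3,1,4]) + X j i i (pl [2,3,1,4])) =
     48 * X i i j (pl [2,3,1,4]) + 48 * X i j i (pl [2,3,1,4]) + 48 * X j i i (pl [2,3,1,4])" by simp
  have i0: "i \<noteq> 0" "j \<noteq> 0" using assms by auto
  show ?thesis
    unfolding of_int_mult[symmetric, where 'a=rat] of_int_numeral[symmetric, where 'a=rat] e X_at[OF L]
    apply (cases "even i"; cases "even j")
    using i0 apply (simp_all add: tabs_def coef_def PL_def six algebra_simps power_0_left)
    done
qed

lemma val_s13:
  fixes i j :: nat
  assumes "i \<ge> 1" and "j \<ge> 1"
  shows "(48::rat) * of_int (X i i j (pl [2,1,4,3]) + X i j i (pl [2,1,4,3]) + X j i i (pl [2,1,4,3])) = 48 * ((1/24::rat) * (1 + (-1)^j) * (6^i + 2^i*3^j + 2^j*3^i - 3*(-1)^i*(2^i + 2^j) - 3*2^i))"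
proof -
  have L: "[2,1,4,3] \<in> set PL" by (simp add: PL_def)
  have e: "48 * (X i i j (pl [2,1,4,3]) + X i j i (pl [2,1,4,3]) + X j i i (pl [2,1,4,3])) =
     48 * X i i j (pl [2,1,4,3]) + 48 * X i j i (pl [2,1,4,3]) + 48 * X j i i (pl [2,1,4,3])" by simp
  have i0: "i \<noteq> 0" "j \<noteq> 0" using assms by auto
  show ?thesis
    unfolding of_int_mult[symmetric, where 'a=rat] of_int_numeral[symmetric, where 'a=rat] e X_at[OF L]
    apply (cases "even i"; cases "even j")
    using i0 apply (simp_all add: tabs_def coef_def PL_def six algebra_simps power_0_left)
    done
qed

lemma val_s123:
  fixes i j :: nat
  assumes "i \<ge> 1" and "j \<ge> 1"
  shows "(48::rat) * of_int (X i i j (pl [2,3,4,1]) + X i j i (pl [2,3,4,1]) + X j i i (pl [2,3,4,1])) = 48 * ((1/24::rat) * (1 - (-1)^j) * (6^i + 2^i*3^j + 2^j*3^i - 3*(-1)^i*(2^i + 2^j) + 3*2^i))"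
proof -
  have L: "[2,3,4,1] \<in> set PL" by (simp add: PL_def)
  have e: "48 * (X i i j (pl [2,3,4,1]) + X i j i (pl [2,3,4,1]) + X j i i (pl [2,3,4,1])) =
     48 * X i i j (pl [2,3,4,1]) + 48 * X i j i (pl [2,3,4,1]) + 48 * X j i i (pl [2,3,4,1])" by simp
  have i0: "i \<noteq> 0" "j \<noteq> 0" using assms by auto
  show ?thesis
    unfolding of_int_mult[symmetric, where 'a=rat] of_int_numeral[symmetric, where 'a=rat] e X_at[OF L]
    apply (cases "even i"; cases "even j")
    using i0 apply (simp_all add: tabs_def coef_def PL_def six algebra_simps power_0_left)
    done
qed

theorem proposition2p5:
  fixes i j :: nat
  assumes "i \<ge> 1" and "j \<ge> 1" and "i \<noteq> j"
  defines "m \<equiv> msym_JM (rev (sort [i, i, j]))"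
  shows "of_int (m id) = (1/24::rat) * (1 + (-1)^j) *
            (6^i + 2^i*3^j + 2^j*3^i + 9*(-1)^i*(2^i + 2^j) + 9*2^i) \<and>
         of_int (m s1) = (1/24::rat) * (1 - (-1)^j) *
            (6^i + 2^i*3^j + 2^j*3^i + 3*(-1)^i*(2^i + 2^j) - 3*2^i) \<and>
         of_int (m (s1 \<circ> s2)) = (1/24::rat) * (1 + (-1)^j) *
            (6^i + 2^i*3^j + 2^j*3^i) \<and>
         of_int (m (s1 \<circ> s3)) = (1/24::rat) * (1 + (-1)^j) *
            (6^i + 2^i*3^j + 2^j*3^i - 3*(-1)^i*(2^i + 2^j) - 3*2^i) \<and>
         of_int (m (s1 \<circ> s2 \<circ> s3)) = (1/24::rat) * (1 - (-1)^j) *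
            (6^i + 2^i*3^j + 2^j*3^i - 3*(-1)^i*(2^i + 2^j) + 3*2^i)"
proof -
  have me: "\<And>w. m w = X i i j w + X i j i w + X j i i w"
    unfolding m_def using m_eq assms(1-3) by blast
  have c: "\<And>x y::rat. 48 * x = 48 * y \<Longrightarrow> x = y" by simp
  note v = c[OF val_id[OF assms(1,2)]] c[OF val_s1[OF assms(1,2)]] c[OF val_s12[OF assms(1,2)]]
      c[OF val_s13[OF assms(1,2)]] c[OF val_s123[OF assms(1,2)]]
  show ?thesis
    unfolding me
    unfolding comp_s123
    unfolding comp_s12 comp_s13
    unfolding comp_s1 id_pl
    apply (intro conjI)
        apply (rule v(1)[unfolded mult.assoc[symmetric]])
       apply (rule v(2)[unfolded mult.assoc[symmetric]])
      apply (rule v(3)[unfolded mult.assoc[symmetric]])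
     apply (rule v(4)[unfolded mult.assoc[symmetric]])
    apply (rule v(5)[unfolded mult.assoc[symmetric]])
    done
qed

end
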